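(* Let $G=(V,E)$ be a connected graph with $n$ vertices, $\tau$ a set of types with $|\tau|>1$, $f:\tau\to\mathbb{Q}_{\ge1}$ a fitness function, and $M_0\in\Omega_0(G,\tau)$. Suppose the types in $\tau$ have $k$ distinct fitnesses $f_1<f_2<\dots<f_k$. For $i\in\{1,\dots,k\}$ let $\ell_i=|f^{-1}(f_i)|$ and $\ell=\max_i\ell_i$. Then: (1) $\mathbb{E}(A(G,\tau,f,M_0))\le(\ell-1)n^6+\sum_{i=2}^k\frac{f_i}{f_i-f_{i-1}}(n+1)n^3$; (2) for every $j\in\{2,\dots,k\}$ and every type $\beta$ with $f(\beta)=f_j$, $\mathbb{E}(A_\beta(G,\tau,f,M_0))\le(\ell_j-1)n^6+\sum_{i=j}^k\frac{f_i}{f_i-f_{i-1}}(n+1)n^3$; (3) for every type $\beta$ with $f(\beta)=f_1$, $\mathbb{E}(A_\beta(G,\tau,f,M_0))\le(\ell_1-1)n^6+\sum_{i=2}^k\frac{f_i}{f_i-f_{i-1}}(n+1)n^3$.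
   Context: For $G=(V,E)$, $N(v)$ is the neighbourhood of $v$. For a state $S:V\to\tau$, $S|_{v\to w}$ equals $S$ except $w$ gets type $S(v)$. The Moran process $M(G,\tau,f,M_0)$: Markov chain on states from $M_0$; given $M_t$, choose $v$ with probability $f(M_t(v))/\sum_uf(M_t(u))$, then $w\in N(v)$ uniformly, set $M_{t+1}=M_t|_{v\to w}$. $V_j(t)=\{v:M_t(v)=j\}$. $\Omega_0(G,\tau)$ is the set of states $V\to\tau$ with range $\tau$. Absorption time of type $j$: $A_j(G,\tau,f,M_0)=\min\{t\in\mathbb{Z}_{\ge0}:V_j(t)=V\text{ or }V_j(t)=\emptyset\}$. Total absorption time: $A(G,\tau,f,M_0)=\min\{t\in\mathbb{Z}_{\ge0}: V_j(t)=V\text{ for some }j\in\tau\}$. *)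

theory Defs
  imports "HOL-Probability.Probability"
begin

definition simple_graph :: "'v set \<Rightarrow> ('v \<Rightarrow> 'v \<Rightarrow> bool) \<Rightarrow> bool" where
  "simple_graph V E \<longleftrightarrow> finite V \<and> (\<forall>u w. E u w \<longrightarrow> u \<in> V \<and> w \<in> V)
      \<and> (\<forall>u w. E u w \<longrightarrow> E w u) \<and> (\<forall>u. \<not> E u u)"

definition connected_graph :: "'v set \<Rightarrow> ('v \<Rightarrow> 'v \<Rightarrow> bool) \<Rightarrow> bool" where
  "connected_graph V E \<longleftrightarrow> simple_graph V E \<and> (\<forall>u\<in>V. \<forall>w\<in>V. E\<^sup>*\<^sup>* u w)"

definition nbhd :: "'v set \<Rightarrow> ('v \<Rightarrow> 'v \<Rightarrow> bool) \<Rightarrow> 'v \<Rightarrow> 'v set" where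
  "nbhd V E v = {w \<in> V. E v w}"

definition Omega0 :: "'v set \<Rightarrow> 't set \<Rightarrow> ('v \<Rightarrow> 't) set" where
  "Omega0 V \<tau> = {S. S ` V = \<tau>}"

definition moran_step :: "'v set \<Rightarrow> ('v \<Rightarrow> 'v \<Rightarrow> bool) \<Rightarrow> ('t \<Rightarrow> rat) \<Rightarrow> ('v \<Rightarrow> 't) \<Rightarrow> ('v \<Rightarrow> 't) pmf" where
  "moran_step V E f S =
     bind_pmf (embed_pmf (\<lambda>v. if v \<in> V then real_of_rat (f (S v)) / (\<Sum>u\<in>V. real_of_rat (f (S u))) else 0))
       (\<lambda>v. map_pmf (\<lambda>w. S(w := S v)) (pmf_of_set (nbhd V E v)))"

fun moran_traj :: "'v set \<Rightarrow> ('v \<Rightarrow> 'v \<Rightarrow> bool) \<Rightarrow> ('t \<Rightarrow> rat) \<Rightarrow> ('v \<Rightarrow> 't) \<Rightarrow> nat \<Rightarrow> ('v \<Rightarrow> 't) list pmf" where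
  "moran_traj V E f M0 0 = return_pmf [M0]"
| "moran_traj V E f M0 (Suc t) =
     bind_pmf (moran_traj V E f M0 t) (\<lambda>xs. map_pmf (\<lambda>s. xs @ [s]) (moran_step V E f (last xs)))"

text \<open>Expected value of the hitting time T = min {t. P (M_t)}, via E[T] = sum_t Pr[T > t]
  (value in ennreal; it is infinity if T is not a.s. finite with finite mean).\<close>
definition moran_exp_hit :: "'v set \<Rightarrow> ('v \<Rightarrow> 'v \<Rightarrow> bool) \<Rightarrow> ('t \<Rightarrow> rat) \<Rightarrow> ('v \<Rightarrow> 't)
     \<Rightarrow> (('v \<Rightarrow> 't) \<Rightarrow> bool) \<Rightarrow> ennreal" where
  "moran_exp_hit V E f M0 P =
     (\<Sum>t. ennreal (measure_pmf.prob (moran_traj V E f M0 t) {xs. \<forall>s\<in>set xs. \<not> P s}))"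

definition absorbed_type :: "'v set \<Rightarrow> 't \<Rightarrow> ('v \<Rightarrow> 't) \<Rightarrow> bool" where
  "absorbed_type V j S \<longleftrightarrow> (\<forall>v\<in>V. S v = j) \<or> (\<forall>v\<in>V. S v \<noteq> j)"

definition absorbed_total :: "'v set \<Rightarrow> 't set \<Rightarrow> ('v \<Rightarrow> 't) \<Rightarrow> bool" where
  "absorbed_total V \<tau> S \<longleftrightarrow> (\<exists>j\<in>\<tau>. \<forall>v\<in>V. S v = j)"

definition A_exp where "A_exp V E \<tau> f M0 = moran_exp_hit V E f M0 (absorbed_total V \<tau>)"
definition A_type_exp where "A_type_exp V E f M0 j = moran_exp_hit V E f M0 (absorbed_type V j)"

text \<open>Distinct fitness values f_1 < ... < f_k (1-indexed), k, and multiplicities l_i.\<close>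
definition nfit :: "('t \<Rightarrow> rat) \<Rightarrow> 't set \<Rightarrow> nat" where
  "nfit f \<tau> = card (f ` \<tau>)"

definition fitv :: "('t \<Rightarrow> rat) \<Rightarrow> 't set \<Rightarrow> nat \<Rightarrow> real" where
  "fitv f \<tau> i = real_of_rat (sorted_list_of_set (f ` \<tau>) ! (i - 1))"

definition fit_mult :: "('t \<Rightarrow> rat) \<Rightarrow> 't set \<Rightarrow> nat \<Rightarrow> nat" where
  "fit_mult f \<tau> i = card {x \<in> \<tau>. real_of_rat (f x) = fitv f \<tau> i}"

definition maxmult :: "('t \<Rightarrow> rat) \<Rightarrow> 't set \<Rightarrow> nat" where
  "maxmult f \<tau> = Max (fit_mult f \<tau> ` {1..nfit f \<tau>})"

definition fit_sum :: "('t \<Rightarrow> rat) \<Rightarrow> 't set \<Rightarrow> nat \<Rightarrow> nat \<Rightarrow> real" where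
  "fit_sum f \<tau> n j = (\<Sum>i = j..nfit f \<tau>.
      fitv f \<tau> i / (fitv f \<tau> i - fitv f \<tau> (i - 1)) * (real n + 1) * real n ^ 3)"

end

theory Submission
  imports Defs
begin


fun gtraj :: "('s \<Rightarrow> 's pmf) \<Rightarrow> 's \<Rightarrow> nat \<Rightarrow> 's list pmf" where
  "gtraj K s0 0 = return_pmf [s0]"
| "gtraj K s0 (Suc t) = bind_pmf (gtraj K s0 t) (\<lambda>xs. map_pmf (\<lambda>s. xs @ [s]) (K (last xs)))"

lemma moran_traj_gtraj: "moran_traj V E f M0 t = gtraj (moran_step V E f) M0 t"
  by (induction t) auto

lemma gtraj_support:
  assumes "s0 \<in> I" "\<And>s. s \<in> I \<Longrightarrow> set_pmf (K s) \<subseteq> I \<and> finite (set_pmf (K s))"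
  shows "finite (set_pmf (gtraj K s0 t)) \<and> (\<forall>xs\<in>set_pmf (gtraj K s0 t). xs \<noteq> [] \<and> last xs \<in> I)"
proof (induction t)
  case 0 then show ?case using assms by auto
next
  case (Suc t)
  then show ?case using assms(2) by (fastforce simp: set_bind_pmf)
qed

lemma drift:
  fixes K :: "'s \<Rightarrow> 's pmf" and \<Phi> :: "'s \<Rightarrow> real"
  assumes s0: "s0 \<in> I"
    and supp: "\<And>s. s \<in> I \<Longrightarrow> set_pmf (K s) \<subseteq> I \<and> finite (set_pmf (K s))"
    and nonneg: "\<And>s. s \<in> I \<Longrightarrow> \<Phi> s \<ge> 0"
    and dr: "\<And>s. s \<in> I \<Longrightarrow> \<not> P s \<Longrightarrow> measure_pmf.expectation (K s) \<Phi> \<le> \<Phi> s - 1"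
  shows "(\<Sum>t. ennreal (measure_pmf.prob (gtraj K s0 t) {xs. \<forall>s\<in>set xs. \<not> P s})) \<le> ennreal (\<Phi> s0)"
proof -
  define G where "G xs = (\<forall>s\<in>set xs. \<not> P s)" for xs
  define a where "a t = measure_pmf.prob (gtraj K s0 t) {xs. G xs}" for t
  define b where "b t = measure_pmf.expectation (gtraj K s0 t) (\<lambda>xs. if G xs then \<Phi> (last xs) else 0)" for t
  have S: "finite (set_pmf (gtraj K s0 t)) \<and> (\<forall>xs\<in>set_pmf (gtraj K s0 t). xs \<noteq> [] \<and> last xs \<in> I)" for t
    using gtraj_support[of s0 I K t] s0 supp by blast
  have a_int: "a t = measure_pmf.expectation (gtraj K s0 t) (\<lambda>xs. if G xs then 1 else 0)" for t
  proof -
    have e: "(\<lambda>xs. if G xs then 1 else 0::real) = indicator {xs. G xs}" by (auto simp: indicator_def)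
    show ?thesis unfolding a_def e by (simp add: measure_pmf.emeasure_eq_measure)
  qed
  have b0: "b t \<ge> 0" for t
    unfolding b_def using S[of t] nonneg
    by (intro integral_nonneg_AE) (auto simp: AE_measure_pmf_iff)
  have step: "b (Suc t) \<le> b t - a t" for t
  proof -
    have "b (Suc t) = measure_pmf.expectation (gtraj K s0 t)
        (\<lambda>xs. measure_pmf.expectation (K (last xs)) (\<lambda>s. if G (xs @ [s]) then \<Phi> s else 0))"
    proof -
      let ?A = "set_pmf (gtraj K s0 t)"
      have "b (Suc t) = (\<Sum>xs\<in>?A. pmf (gtraj K s0 t) xs *\<^sub>R measure_pmf.expectation
          (map_pmf (\<lambda>s. xs @ [s]) (K (last xs))) (\<lambda>xs. if G xs then \<Phi> (last xs) else 0))"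
        unfolding b_def gtraj.simps
        by (rule pmf_expectation_bind) (use S[of t] supp in auto)
      also have "\<dots> = measure_pmf.expectation (gtraj K s0 t)
        (\<lambda>xs. measure_pmf.expectation (K (last xs)) (\<lambda>s. if G (xs @ [s]) then \<Phi> s else 0))"
        unfolding integral_map_pmf last_snoc
        by (rule integral_measure_pmf[symmetric]) (use S[of t] in auto)
      finally show ?thesis .
    qed
    also have "\<dots> \<le> measure_pmf.expectation (gtraj K s0 t)
        (\<lambda>xs. (if G xs then \<Phi> (last xs) else 0) - (if G xs then 1 else 0))"
    proof (intro integral_mono_AE)
      show "integrable (measure_pmf (gtraj K s0 t)) (\<lambda>xs. measure_pmf.expectation (K (last xs)) (\<lambda>s. if G (xs @ [s]) then \<Phi> s else 0))"
        using S[of t] by (simp add: integrable_measure_pmf_finite)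
      show "integrable (measure_pmf (gtraj K s0 t)) (\<lambda>xs. (if G xs then \<Phi> (last xs) else 0) - (if G xs then 1 else 0))"
        using S[of t] by (simp add: integrable_measure_pmf_finite)
      show "AE xs in measure_pmf (gtraj K s0 t). measure_pmf.expectation (K (last xs)) (\<lambda>s. if G (xs @ [s]) then \<Phi> s else 0)
          \<le> (if G xs then \<Phi> (last xs) else 0) - (if G xs then 1 else 0)"
        unfolding AE_measure_pmf_iff
      proof
        fix xs assume xs: "xs \<in> set_pmf (gtraj K s0 t)"
        then have ne: "xs \<noteq> []" and l: "last xs \<in> I" using S[of t] by auto
        show "measure_pmf.expectation (K (last xs)) (\<lambda>s. if G (xs @ [s]) then \<Phi> s else 0)
          \<le> (if G xs then \<Phi> (last xs) else 0) - (if G xs then 1 else 0)"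
        proof (cases "G xs")
          case True
          then have np: "\<not> P (last xs)" using ne unfolding G_def by auto
          have "measure_pmf.expectation (K (last xs)) (\<lambda>s. if G (xs @ [s]) then \<Phi> s else 0)
              \<le> measure_pmf.expectation (K (last xs)) \<Phi>"
            using supp[OF l] nonneg
            by (intro integral_mono_AE) (auto simp: integrable_measure_pmf_finite AE_measure_pmf_iff)
          also have "\<dots> \<le> \<Phi> (last xs) - 1" using dr[OF l np] .
          finally show ?thesis using True by simp
        next
          case False
          then have "\<And>s. \<not> G (xs @ [s])" unfolding G_def by auto
          then show ?thesis using False by simp
        qed
      qed
    qed
    also have "\<dots> = b t - a t"
      unfolding b_def a_int
      by (subst Bochner_Integration.integral_diff) (use S[of t] in \<open>auto simp: integrable_measure_pmf_finite\<close>)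
    finally show ?thesis .
  qed
  have part: "(\<Sum>t<N. a t) \<le> b 0 - b N" for N
  proof (induction N)
    case 0 then show ?case by simp
  next
    case (Suc N) then show ?case using step[of N] by simp
  qed
  have bb: "b 0 \<le> \<Phi> s0"
    unfolding b_def using nonneg[OF s0] by (simp add: G_def)
  have a0: "a t \<ge> 0" for t unfolding a_def by simp
  have "(\<Sum>t. ennreal (a t)) \<le> ennreal (\<Phi> s0)"
  proof (rule suminf_le_const[OF summableI])
    fix N
    have "(\<Sum>t<N. ennreal (a t)) = ennreal (\<Sum>t<N. a t)"
      using a0 by (simp add: sum_ennreal)
    also have "\<dots> \<le> ennreal (\<Phi> s0)"
      using part[of N] b0[of N] bb by (intro ennreal_leI) linarith
    finally show "(\<Sum>t<N. ennreal (a t)) \<le> ennreal (\<Phi> s0)" .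
  qed
  then show ?thesis unfolding a_def G_def .
qed



locale msetup =
  fixes V :: "'v set" and E :: "'v \<Rightarrow> 'v \<Rightarrow> bool" and \<tau> :: "'t set" and f :: "'t \<Rightarrow> rat"
  assumes conn: "connected_graph V E"
    and cardV: "card V \<ge> 2"
    and fit: "\<forall>x\<in>\<tau>. f x \<ge> 1"
    and fintau: "finite \<tau>"
begin

definition deg :: "'v \<Rightarrow> real" where "deg v = real (card (nbhd V E v))"
definition Fw :: "('v \<Rightarrow> 't) \<Rightarrow> real" where "Fw S = (\<Sum>u\<in>V. real_of_rat (f (S u)))"
definition Ex :: "('v \<Rightarrow> 't) \<Rightarrow> (('v \<Rightarrow> 't) \<Rightarrow> real) \<Rightarrow> real" where
  "Ex S g = (\<Sum>v\<in>V. \<Sum>w\<in>V. if E v w then real_of_rat (f (S v)) / (Fw S * deg v) * g (S(w := S v)) else 0)"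
definition II :: "('v \<Rightarrow> 't) set" where "II = {S. S ` V \<subseteq> \<tau>}"

lemma finV: "finite V" using conn by (simp add: connected_graph_def simple_graph_def)
lemma Ein: "E u w \<Longrightarrow> u \<in> V \<and> w \<in> V" using conn by (simp add: connected_graph_def simple_graph_def)
lemma Esym: "E u w \<Longrightarrow> E w u" using conn by (simp add: connected_graph_def simple_graph_def)
lemma Eirr: "\<not> E u u" using conn by (simp add: connected_graph_def simple_graph_def)
lemma Econn: "u \<in> V \<Longrightarrow> w \<in> V \<Longrightarrow> E\<^sup>*\<^sup>* u w" using conn by (simp add: connected_graph_def)

lemma nbhd_fin: "finite (nbhd V E v)" using finV by (simp add: nbhd_def)

lemma nbhd_ne: assumes "v \<in> V" shows "nbhd V E v \<noteq> {}"
proof -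
  have "card V > 1" using cardV by simp
  then have "\<not> V \<subseteq> {v}" using card_mono[of "{v}" V] by auto
  then obtain u where u: "u \<in> V" "u \<noteq> v" by blast
  have "E\<^sup>*\<^sup>* v u" using Econn assms u by blast
  then obtain y where "E v y" using u(2)
    by (metis converse_rtranclpE)
  then show ?thesis using Ein unfolding nbhd_def by blast
qed

lemma deg_ge1: "v \<in> V \<Longrightarrow> deg v \<ge> 1"
proof -
  assume "v \<in> V"
  then have "card (nbhd V E v) \<ge> 1" using nbhd_ne nbhd_fin[of v]
    by (simp add: card_gt_0_iff Suc_le_eq)
  then show ?thesis unfolding deg_def by simp
qed

lemma deg_le: "deg v \<le> real (card V)"
  unfolding deg_def nbhd_def using finV by (simp add: card_mono)

lemma f_pos: "S \<in> II \<Longrightarrow> v \<in> V \<Longrightarrow> real_of_rat (f (S v)) \<ge> 1"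
proof -
  assume "S \<in> II" "v \<in> V"
  then have "f (S v) \<ge> 1" using fit unfolding II_def by auto
  then show ?thesis using of_rat_less_eq[of 1 "f (S v)"] by simp
qed

lemma Fw_pos: assumes "S \<in> II" shows "Fw S > 0"
proof -
  have "V \<noteq> {}" using cardV by auto
  then obtain v where "v \<in> V" by auto
  have "real_of_rat (f (S v)) \<le> Fw S"
    unfolding Fw_def using \<open>v \<in> V\<close> finV f_pos[OF assms]
    by (intro member_le_sum) (auto intro: order_trans[OF zero_le_one])
  then show ?thesis using f_pos[OF assms \<open>v \<in> V\<close>] by linarith
qed

definition pw :: "('v \<Rightarrow> 't) \<Rightarrow> 'v \<Rightarrow> real" where
  "pw S v = (if v \<in> V then real_of_rat (f (S v)) / (\<Sum>u\<in>V. real_of_rat (f (S u))) else 0)"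

lemma pw_nonneg: "S \<in> II \<Longrightarrow> pw S v \<ge> 0"
proof -
  assume a: "S \<in> II"
  show ?thesis
  proof (cases "v \<in> V")
    case True
    have "real_of_rat (f (S v)) \<ge> 0" using f_pos[OF a True] by linarith
    then show ?thesis using Fw_pos[OF a] True unfolding pw_def Fw_def by simp
  qed (simp add: pw_def)
qed

lemma pw_sum: assumes "S \<in> II" shows "(\<integral>\<^sup>+x. ennreal (pw S x) \<partial>count_space UNIV) = 1"
proof -
  have "(\<integral>\<^sup>+x. ennreal (pw S x) \<partial>count_space UNIV) = (\<Sum>x\<in>V. ennreal (pw S x))"
    by (rule nn_integral_count_space') (auto simp: finV pw_def)
  also have "\<dots> = ennreal (\<Sum>x\<in>V. pw S x)"
    using pw_nonneg[OF assms] by (simp add: sum_ennreal)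
  also have "(\<Sum>x\<in>V. pw S x) = 1"
    using Fw_pos[OF assms] unfolding pw_def Fw_def
    by (simp add: sum_divide_distrib[symmetric])
  finally show ?thesis by simp
qed

lemma step_eq: "moran_step V E f S = bind_pmf (embed_pmf (pw S))
   (\<lambda>v. map_pmf (\<lambda>w. S(w := S v)) (pmf_of_set (nbhd V E v)))"
  unfolding moran_step_def pw_def by simp

lemma pmf_pw: "S \<in> II \<Longrightarrow> pmf (embed_pmf (pw S)) v = pw S v"
  by (rule pmf_embed_pmf) (auto simp: pw_nonneg pw_sum)

lemma set_pw: "S \<in> II \<Longrightarrow> set_pmf (embed_pmf (pw S)) \<subseteq> V"
  by (auto simp: set_pmf_eq pmf_pw pw_def split: if_splits)

lemma set_step: assumes "S \<in> II"
  shows "set_pmf (moran_step V E f S) \<subseteq> {S(w := S v) | v w. v \<in> V \<and> E v w}"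
proof
  fix x assume "x \<in> set_pmf (moran_step V E f S)"
  then obtain v where v: "v \<in> set_pmf (embed_pmf (pw S))"
    and x: "x \<in> set_pmf (map_pmf (\<lambda>w. S(w := S v)) (pmf_of_set (nbhd V E v)))"
    unfolding step_eq by (auto simp: set_bind_pmf)
  have vV: "v \<in> V" using set_pw[OF assms] v by auto
  then show "x \<in> {S(w := S v) | v w. v \<in> V \<and> E v w}"
    using x nbhd_ne[OF vV] nbhd_fin[of v] by (auto simp: nbhd_def)
qed

lemma step_fin: assumes "S \<in> II" shows "finite (set_pmf (moran_step V E f S))"
proof -
  have "{S(w := S v) | v w. v \<in> V \<and> E v w} \<subseteq> (\<lambda>(v,w). S(w := S v)) ` (V \<times> V)"
    using Ein by fastforce
  then show ?thesis using set_step[OF assms] finV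
    by (meson finite_SigmaI finite_imageI finite_subset)
qed

lemma step_II: assumes "S \<in> II" shows "set_pmf (moran_step V E f S) \<subseteq> II"
  using set_step[OF assms] assms Ein unfolding II_def by fastforce

lemma step_exp: assumes "S \<in> II"
  shows "measure_pmf.expectation (moran_step V E f S) g = Ex S g"
proof -
  have "measure_pmf.expectation (moran_step V E f S) g =
     (\<Sum>v\<in>V. pmf (embed_pmf (pw S)) v *\<^sub>R measure_pmf.expectation
        (map_pmf (\<lambda>w. S(w := S v)) (pmf_of_set (nbhd V E v))) g)"
    unfolding step_eq
    by (rule pmf_expectation_bind) (use finV set_pw[OF assms] nbhd_fin in \<open>auto simp: nbhd_ne\<close>)
  also have "\<dots> = (\<Sum>v\<in>V. pw S v * ((\<Sum>w\<in>nbhd V E v. g (S(w := S v))) / deg v))"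
    by (intro sum.cong refl) (simp add: pmf_pw[OF assms] integral_pmf_of_set nbhd_fin nbhd_ne deg_def)
  also have "\<dots> = Ex S g"
    unfolding Ex_def
  proof (intro sum.cong refl)
    fix v assume v: "v \<in> V"
    have "(\<Sum>w\<in>nbhd V E v. g (S(w := S v))) = (\<Sum>w\<in>V. if E v w then g (S(w := S v)) else 0)"
      unfolding nbhd_def by (simp add: sum.inter_filter finV)
    then show pp: "pw S v * ((\<Sum>w\<in>nbhd V E v. g (S(w := S v))) / deg v) =
      (\<Sum>w\<in>V. if E v w then real_of_rat (f (S v)) / (Fw S * deg v) * g (S(w := S v)) else 0)"
    proof -
      have p: "pw S v = real_of_rat (f (S v)) / Fw S" using v by (simp add: pw_def Fw_def)
      show ?thesis unfolding p \<open>(\<Sum>w\<in>nbhd V E v. g (S(w := S v))) = _\<close>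
        by (simp add: sum_distrib_left sum_divide_distrib; intro sum.cong refl; simp)
    qed
  qed
  finally show ?thesis .
qed

end



context msetup begin

abbreviation "r t \<equiv> real_of_rat (f t)"
abbreviation "nn \<equiv> real (card V)"

definition phi :: "'t set \<Rightarrow> ('v \<Rightarrow> 't) \<Rightarrow> real" where
  "phi A S = (\<Sum>x\<in>V. if S x \<in> A then 1 / deg x else 0)"
definition phimax :: real where "phimax = (\<Sum>x\<in>V. 1 / deg x)"
definition wt :: "('v \<Rightarrow> 't) \<Rightarrow> 'v \<Rightarrow> real" where "wt S v = r (S v) / (Fw S * deg v)"
definition Ex2 :: "('v \<Rightarrow> 't) \<Rightarrow> ('v \<Rightarrow> 'v \<Rightarrow> real) \<Rightarrow> real" where
  "Ex2 S h = (\<Sum>v\<in>V. \<Sum>w\<in>V. if E v w then wt S v * h v w else 0)"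
definition D :: "'t set \<Rightarrow> ('v \<Rightarrow> 't) \<Rightarrow> 'v \<Rightarrow> 'v \<Rightarrow> real" where
  "D A S v w = (if S v \<in> A then 1 else 0) - (if S w \<in> A then 1 else 0)"

lemma Ex_Ex2: "Ex S g = Ex2 S (\<lambda>v w. g (S(w := S v)))"
  unfolding Ex_def Ex2_def wt_def by simp

lemma Ex2_cong: "(\<And>v w. v \<in> V \<Longrightarrow> w \<in> V \<Longrightarrow> E v w \<Longrightarrow> h v w = h' v w) \<Longrightarrow> Ex2 S h = Ex2 S h'"
  unfolding Ex2_def by (intro sum.cong refl) auto

lemma wt_nonneg: "S \<in> II \<Longrightarrow> v \<in> V \<Longrightarrow> wt S v \<ge> 0"
  unfolding wt_def using f_pos[of S v] Fw_pos[of S] deg_ge1[of v]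
  by (intro divide_nonneg_pos) auto

lemma Ex2_mono: "S \<in> II \<Longrightarrow> (\<And>v w. v \<in> V \<Longrightarrow> w \<in> V \<Longrightarrow> E v w \<Longrightarrow> h v w \<le> h' v w) \<Longrightarrow> Ex2 S h \<le> Ex2 S h'"
  unfolding Ex2_def by (intro sum_mono) (auto intro: mult_left_mono wt_nonneg)

lemma Ex2_add: "Ex2 S (\<lambda>v w. h v w + h' v w) = Ex2 S h + Ex2 S h'"
  unfolding Ex2_def by (simp add: sum.distrib[symmetric] distrib_left if_distrib cong: if_cong)

lemma Ex2_diff: "Ex2 S (\<lambda>v w. h v w - h' v w) = Ex2 S h - Ex2 S h'"
  unfolding Ex2_def sum_subtractf[symmetric] by (intro sum.cong refl) (auto simp: right_diff_distrib)

lemma Ex2_cmult: "Ex2 S (\<lambda>v w. c * h v w) = c * Ex2 S h"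
  unfolding Ex2_def by (simp add: sum_distrib_left cong: if_cong) (intro sum.cong refl; simp add: ac_simps)

lemma Ex2_sum: "Ex2 S (\<lambda>v w. \<Sum>t\<in>T. h t v w) = (\<Sum>t\<in>T. Ex2 S (h t))"
proof -
  have e: "\<And>v w. (if E v w then wt S v * (\<Sum>t\<in>T. h t v w) else 0) = (\<Sum>t\<in>T. if E v w then wt S v * h t v w else 0)"
    by (simp add: sum_distrib_left)
  have "(\<Sum>v\<in>V. \<Sum>w\<in>V. \<Sum>t\<in>T. if E v w then wt S v * h t v w else 0)
      = (\<Sum>v\<in>V. \<Sum>t\<in>T. \<Sum>w\<in>V. if E v w then wt S v * h t v w else 0)"
    by (rule sum.cong[OF refl]) (rule sum.swap)
  also have "\<dots> = (\<Sum>t\<in>T. \<Sum>v\<in>V. \<Sum>w\<in>V. if E v w then wt S v * h t v w else 0)"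
    by (rule sum.swap)
  finally show ?thesis unfolding Ex2_def e .
qed

lemma Ex2_one: assumes "S \<in> II" shows "Ex2 S (\<lambda>v w. 1) = 1"
proof -
  have "Ex2 S (\<lambda>v w. 1) = (\<Sum>v\<in>V. wt S v * deg v)"
    unfolding Ex2_def deg_def nbhd_def
    by (intro sum.cong refl) (simp add: sum.If_cases finV Int_def)
  also have "\<dots> = (\<Sum>v\<in>V. r (S v) / Fw S)"
  proof (intro sum.cong refl)
    fix v assume "v \<in> V" then have "deg v \<noteq> 0" using deg_ge1[of v] by linarith
    then show "wt S v * deg v = r (S v) / Fw S" unfolding wt_def by simp
  qed
  also have "\<dots> = 1" using Fw_pos[OF assms] unfolding Fw_def
    by (simp add: sum_divide_distrib[symmetric])
  finally show ?thesis .
qed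

lemma Ex2_const: assumes "S \<in> II" shows "Ex2 S (\<lambda>v w. c) = c"
  using Ex2_cmult[of S c "\<lambda>v w. 1"] Ex2_one[OF assms] by simp

lemma phi_upd: assumes "w \<in> V"
  shows "phi A (S(w := S v)) = phi A S + D A S v w / deg w"
proof -
  have "phi A (S(w := S v)) = (if S v \<in> A then 1 / deg w else 0) + (\<Sum>x\<in>V - {w}. if S x \<in> A then 1 / deg x else 0)"
    unfolding phi_def using assms finV by (subst sum.remove[of V w]) (auto intro!: sum.cong)
  moreover have "phi A S = (if S w \<in> A then 1 / deg w else 0) + (\<Sum>x\<in>V - {w}. if S x \<in> A then 1 / deg x else 0)"
    unfolding phi_def using assms finV by (subst sum.remove[of V w]) auto
  ultimately show ?thesis unfolding D_def by (simp add: diff_divide_distrib)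
qed

end


context msetup begin

lemma edge_cross:
  assumes "x \<in> V" "y \<in> V" "Q x" "\<not> Q y"
  shows "\<exists>v w. v \<in> V \<and> w \<in> V \<and> E v w \<and> Q v \<and> \<not> Q w"
proof -
  have "E\<^sup>*\<^sup>* x y" using Econn assms by blast
  then have "Q x \<Longrightarrow> \<not> Q y \<Longrightarrow> \<exists>v w. E v w \<and> Q v \<and> \<not> Q w"
  proof (induction rule: rtranclp_induct)
    case base then show ?case by simp
  next
    case (step y z)
    then show ?case by (cases "Q y") auto
  qed
  then show ?thesis using assms Ein by blast
qed

lemma sym2: "2 * Ex2 S (\<lambda>v w. D A S v w / deg w) =
  (\<Sum>v\<in>V. \<Sum>w\<in>V. if E v w then (r (S v) - r (S w)) * D A S v w / (Fw S * deg v * deg w) else 0)"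
proof -
  let ?a = "\<lambda>v w. if E v w then wt S v * (D A S v w / deg w) else 0"
  have sw: "(\<Sum>v\<in>V. \<Sum>w\<in>V. ?a v w) = (\<Sum>v\<in>V. \<Sum>w\<in>V. ?a w v)"
    by (rule sum.swap)
  have "2 * Ex2 S (\<lambda>v w. D A S v w / deg w) = (\<Sum>v\<in>V. \<Sum>w\<in>V. ?a v w) + (\<Sum>v\<in>V. \<Sum>w\<in>V. ?a w v)"
    unfolding Ex2_def sw[symmetric] by simp
  also have "\<dots> = (\<Sum>v\<in>V. \<Sum>w\<in>V. ?a v w + ?a w v)"
    by (simp add: sum.distrib)
  also have "\<dots> = (\<Sum>v\<in>V. \<Sum>w\<in>V. if E v w then (r (S v) - r (S w)) * D A S v w / (Fw S * deg v * deg w) else 0)"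
  proof (intro sum.cong refl)
    fix v w
    show "?a v w + ?a w v = (if E v w then (r (S v) - r (S w)) * D A S v w / (Fw S * deg v * deg w) else 0)"
    proof (cases "E v w")
      case True
      then have "E w v" using Esym by blast
      then show ?thesis using True unfolding wt_def D_def
        by (auto simp: diff_divide_distrib ac_simps)
    next
      case False
      then have "\<not> E w v" using Esym by blast
      then show ?thesis using False by simp
    qed
  qed
  finally show ?thesis .
qed

lemma Fw_le: assumes "\<forall>x\<in>V. r (S x) \<le> ft" shows "Fw S \<le> nn * ft"
  unfolding Fw_def using sum_bounded_above[of V "\<lambda>u. r (S u)" ft] assms by simp

lemma drift_top:
  assumes S: "S \<in> II" and top: "\<forall>x\<in>V. r (S x) \<le> ft"
    and cls: "\<forall>x\<in>V. S x \<in> A \<longleftrightarrow> r (S x) = ft"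
    and e: "v0 \<in> V" "w0 \<in> V" "E v0 w0" "S v0 \<in> A" "S w0 \<notin> A"
    and fs: "r (S w0) \<le> fs" "fs \<le> ft"
  shows "Ex2 S (\<lambda>v w. D A S v w / deg w) \<ge> (ft - fs) / (ft * nn ^ 3)"
proof -
  let ?b = "\<lambda>(v, w). if E v w then (r (S v) - r (S w)) * D A S v w / (Fw S * deg v * deg w) else 0"
  have bnn: "?b p \<ge> 0" if pV: "p \<in> V \<times> V" for p
  proof -
    obtain v w where p: "p = (v, w)" "v \<in> V" "w \<in> V" using pV by blast
    have dv: "deg v > 0" "deg w > 0" using deg_ge1 p by force+
    have "(r (S v) - r (S w)) * D A S v w \<ge> 0"
      using cls top p unfolding D_def by auto
    then show ?thesis using p dv Fw_pos[OF S] by auto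
  qed
  have ne: "v0 \<noteq> w0" using e Eirr by blast
  have "r (S v0) \<le> ft" using top e(1) by blast
  then have ft_pos: "ft \<ge> 1" using f_pos[OF S e(1)] by linarith
  have dv: "1 \<le> deg v0" "1 \<le> deg w0" using deg_ge1 e by auto
  have b1: "?b (v0, w0) = (ft - r (S w0)) / (Fw S * deg v0 * deg w0)"
    using e cls unfolding D_def by auto
  have b2: "?b (w0, v0) = (ft - r (S w0)) / (Fw S * deg v0 * deg w0)"
    using e cls Esym[OF e(3)] unfolding D_def by (auto simp: field_simps)
  have "2 * Ex2 S (\<lambda>v w. D A S v w / deg w) = (\<Sum>p\<in>V \<times> V. ?b p)"
    unfolding sym2 by (simp add: sum.cartesian_product)
  also have "\<dots> \<ge> (\<Sum>p\<in>{(v0, w0), (w0, v0)}. ?b p)"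
    by (rule sum_mono2) (use finV e bnn in auto)
  finally have "2 * Ex2 S (\<lambda>v w. D A S v w / deg w) \<ge> 2 * ((ft - r (S w0)) / (Fw S * deg v0 * deg w0))"
    using ne b1 b2 by simp
  moreover have "(ft - fs) / (ft * nn ^ 3) \<le> (ft - r (S w0)) / (Fw S * deg v0 * deg w0)"
  proof -
    have den: "0 < Fw S * deg v0 * deg w0" using Fw_pos[OF S] dv by simp
    have "Fw S * deg v0 * deg w0 \<le> (nn * ft) * nn * nn"
      using Fw_le[OF top] deg_le[of v0] deg_le[of w0] Fw_pos[OF S] dv
      by (intro mult_mono) auto
    then have "Fw S * deg v0 * deg w0 \<le> ft * nn ^ 3" by (simp add: power3_eq_cube ac_simps)
    then have "(ft - fs) / (ft * nn ^ 3) \<le> (ft - fs) / (Fw S * deg v0 * deg w0)"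
      using den fs by (intro divide_left_mono) auto
    also have "\<dots> \<le> (ft - r (S w0)) / (Fw S * deg v0 * deg w0)"
      using den fs by (intro divide_right_mono) auto
    finally show ?thesis .
  qed
  ultimately show ?thesis by linarith
qed

lemma drift_neutral0:
  assumes "\<forall>x\<in>V. r (S x) = c"
  shows "Ex2 S (\<lambda>v w. D A S v w / deg w) = 0"
proof -
  have "2 * Ex2 S (\<lambda>v w. D A S v w / deg w) = 0"
    unfolding sym2 using assms by (intro sum.neutral ballI) auto
  then show ?thesis by simp
qed

lemma drift_neutral2:
  assumes S: "S \<in> II" and c: "\<forall>x\<in>V. r (S x) = c"
    and e: "v0 \<in> V" "w0 \<in> V" "E v0 w0" "S v0 \<in> A" "S w0 \<notin> A"
  shows "Ex2 S (\<lambda>v w. (D A S v w / deg w)^2) \<ge> 1 / nn ^ 4"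
proof -
  let ?g = "\<lambda>v w. if E v w then wt S v * (D A S v w / deg w)^2 else 0"
  have gnn: "?g v w \<ge> 0" if "v \<in> V" for v w using wt_nonneg[OF S that] by simp
  have "?g v0 w0 \<le> (\<Sum>w\<in>V. ?g v0 w)"
    by (rule member_le_sum) (use e finV gnn in auto)
  also have "\<dots> \<le> (\<Sum>v\<in>V. \<Sum>w\<in>V. ?g v w)"
    by (rule member_le_sum[where f = "\<lambda>v. \<Sum>w\<in>V. ?g v w"]) (use e finV gnn in \<open>auto intro: sum_nonneg\<close>)
  finally have g1: "?g v0 w0 \<le> Ex2 S (\<lambda>v w. (D A S v w / deg w)^2)" unfolding Ex2_def .
  have dv: "1 \<le> deg v0" "1 \<le> deg w0" using deg_ge1 e by auto
  have c1: "c \<ge> 1" using c f_pos[OF S e(1)] e by auto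
  have Fw: "Fw S = nn * c" unfolding Fw_def using c by simp
  have "?g v0 w0 = 1 / (nn * deg v0 * deg w0 ^ 2)"
    using e c c1 unfolding wt_def D_def Fw by (auto simp: field_simps power2_eq_square)
  moreover have "1 / nn ^ 4 \<le> 1 / (nn * deg v0 * deg w0 ^ 2)"
  proof (rule divide_left_mono)
    have "deg w0 ^ 2 \<le> nn ^ 2" using deg_le[of w0] dv by (intro power_mono) auto
    then have "nn * deg v0 * deg w0 ^ 2 \<le> nn * nn * nn ^ 2"
      using deg_le[of v0] dv by (intro mult_mono) auto
    then show "nn * deg v0 * deg w0 ^ 2 \<le> nn ^ 4" by (simp add: power_numeral_reduce ac_simps)
    show "0 < nn ^ 4 * (nn * deg v0 * deg w0 ^ 2)" using dv cardV by simp
  qed simp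
  ultimately show ?thesis using g1 by linarith
qed

end


context msetup begin

definition gq :: "'t set \<Rightarrow> ('v \<Rightarrow> 't) \<Rightarrow> real" where
  "gq A S = phi A S * (phimax - phi A S)"
definition NN :: "('v \<Rightarrow> 't) \<Rightarrow> real" where
  "NN S = nn ^ 4 * (\<Sum>t\<in>\<tau>. gq {t} S)"

lemma Ex_phi: assumes "S \<in> II"
  shows "Ex S (phi A) = phi A S + Ex2 S (\<lambda>v w. D A S v w / deg w)"
proof -
  have "Ex S (phi A) = Ex2 S (\<lambda>v w. phi A S + D A S v w / deg w)"
    unfolding Ex_Ex2 by (rule Ex2_cong) (simp add: phi_upd)
  then show ?thesis by (simp add: Ex2_add Ex2_const[OF assms])
qed

lemma Ex_gq: assumes "S \<in> II"
  shows "Ex S (gq A) = gq A S + (phimax - 2 * phi A S) * Ex2 S (\<lambda>v w. D A S v w / deg w)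
     - Ex2 S (\<lambda>v w. (D A S v w / deg w)^2)"
proof -
  have "Ex S (gq A) = Ex2 S (\<lambda>v w. (gq A S + (phimax - 2 * phi A S) * (D A S v w / deg w)) - (D A S v w / deg w)^2)"
    unfolding Ex_Ex2 by (rule Ex2_cong) (simp add: phi_upd gq_def algebra_simps power2_eq_square)
  then show ?thesis unfolding Ex2_diff Ex2_add Ex2_cmult Ex2_const[OF assms] .
qed

lemma phi_nonneg: "phi A S \<ge> 0"
  unfolding phi_def using deg_ge1 by (intro sum_nonneg) (auto intro: order_trans[OF zero_le_one])

lemma phi_le: "phi A S \<le> phimax"
  unfolding phi_def phimax_def using deg_ge1 by (intro sum_mono) (auto intro: order_trans[OF zero_le_one])

lemma inv_deg_le: "v \<in> V \<Longrightarrow> 1 / deg v \<le> 1"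
  using deg_ge1[of v] by simp

lemma phimax_le: "phimax \<le> nn"
proof -
  have "phimax \<le> (\<Sum>x\<in>V. 1)" unfolding phimax_def using inv_deg_le by (intro sum_mono) auto
  then show ?thesis by simp
qed

lemma phi_sum: assumes "S \<in> II" shows "(\<Sum>t\<in>\<tau>. phi {t} S) = phimax"
proof -
  have "(\<Sum>t\<in>\<tau>. phi {t} S) = (\<Sum>x\<in>V. \<Sum>t\<in>\<tau>. if S x = t then 1 / deg x else 0)"
    unfolding phi_def by (simp add: sum.swap[of _ \<tau>])
  also have "\<dots> = phimax" unfolding phimax_def
    using assms fintau unfolding II_def by (intro sum.cong refl) (auto simp: sum.delta)
  finally show ?thesis .
qed

lemma NN_bounds: assumes "S \<in> II" shows "0 \<le> NN S" "NN S \<le> nn ^ 6"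
proof -
  have g0: "gq {t} S \<ge> 0" for t unfolding gq_def using phi_nonneg phi_le by simp
  show "0 \<le> NN S" unfolding NN_def using g0 by (simp add: sum_nonneg)
  have "(\<Sum>t\<in>\<tau>. gq {t} S) \<le> (\<Sum>t\<in>\<tau>. phi {t} S * phimax)"
    unfolding gq_def using phi_nonneg phi_le by (intro sum_mono mult_left_mono) auto
  also have "\<dots> = phimax * phimax" using phi_sum[OF assms] by (simp add: sum_distrib_right[symmetric])
  also have "\<dots> \<le> nn * nn" using phimax_le phi_nonneg[of _ S] phi_le[of _ S]
    by (intro mult_mono) (auto intro: order_trans)
  finally have "(\<Sum>t\<in>\<tau>. gq {t} S) \<le> nn * nn" .
  then have "NN S \<le> nn ^ 4 * (nn * nn)" unfolding NN_def by (intro mult_left_mono) auto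
  then show "NN S \<le> nn ^ 6" by (simp add: power_numeral_reduce ac_simps)
qed

lemma NN_drift:
  assumes S: "S \<in> II" and c: "\<forall>x\<in>V. r (S x) = c"
    and vw: "v1 \<in> V" "w1 \<in> V" "S v1 \<noteq> S w1"
  shows "Ex S NN \<le> NN S - 1"
proof -
  have Exg: "Ex S (gq {t}) = gq {t} S - Ex2 S (\<lambda>v w. (D {t} S v w / deg w)^2)" for t
    using Ex_gq[OF S, of "{t}"] drift_neutral0[OF c, of "{t}"] by simp
  have nn2: "Ex2 S (\<lambda>v w. (D {t} S v w / deg w)^2) \<ge> 0" for t
    using Ex2_mono[OF S, of "\<lambda>v w. 0" "\<lambda>v w. (D {t} S v w / deg w)^2"] Ex2_const[OF S, of 0] by simp
  let ?t0 = "S v1"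
  have t0: "?t0 \<in> \<tau>" using S vw unfolding II_def by auto
  obtain v0 w0 where e: "v0 \<in> V" "w0 \<in> V" "E v0 w0" "S v0 = ?t0" "S w0 \<noteq> ?t0"
    using edge_cross[of v1 w1 "\<lambda>x. S x = ?t0"] vw by auto
  have big: "Ex2 S (\<lambda>v w. (D {?t0} S v w / deg w)^2) \<ge> 1 / nn ^ 4"
    by (rule drift_neutral2[OF S c e(1-3)]) (use e in auto)
  have "Ex S NN = nn ^ 4 * (\<Sum>t\<in>\<tau>. Ex S (gq {t}))"
    unfolding NN_def Ex_Ex2 Ex2_cmult Ex2_sum ..
  also have "\<dots> = nn ^ 4 * ((\<Sum>t\<in>\<tau>. gq {t} S) - (\<Sum>t\<in>\<tau>. Ex2 S (\<lambda>v w. (D {t} S v w / deg w)^2)))"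
    unfolding Exg by (simp add: sum_subtractf)
  also have "(\<Sum>t\<in>\<tau>. Ex2 S (\<lambda>v w. (D {t} S v w / deg w)^2)) \<ge> 1 / nn ^ 4"
  proof -
    have "Ex2 S (\<lambda>v w. (D {?t0} S v w / deg w)^2) \<le> (\<Sum>t\<in>\<tau>. Ex2 S (\<lambda>v w. (D {t} S v w / deg w)^2))"
      by (rule member_le_sum[where f = "\<lambda>t. Ex2 S (\<lambda>v w. (D {t} S v w / deg w)^2)"]) (use t0 fintau nn2 in auto)
    then show ?thesis using big by linarith
  qed
  then have "nn ^ 4 * ((\<Sum>t\<in>\<tau>. gq {t} S) - (\<Sum>t\<in>\<tau>. Ex2 S (\<lambda>v w. (D {t} S v w / deg w)^2)))
      \<le> nn ^ 4 * ((\<Sum>t\<in>\<tau>. gq {t} S) - 1 / nn ^ 4)"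
    by (intro mult_left_mono) auto
  also have "\<dots> = NN S - 1" unfolding NN_def using cardV by (simp add: right_diff_distrib)
  finally show ?thesis .
qed

end


context msetup begin

abbreviation "k \<equiv> nfit f \<tau>"
abbreviation "fv \<equiv> fitv f \<tau>"
abbreviation "xsl \<equiv> sorted_list_of_set (f ` \<tau>)"

lemma len_xsl: "length xsl = k"
  unfolding nfit_def by (simp add: fintau)

lemma fv_mono: assumes "1 \<le> i" "i < j" "j \<le> k" shows "fv i < fv j"
proof -
  have "xsl ! (i - 1) < xsl ! (j - 1)"
    using sorted_wrt_nth_less[OF strict_sorted_list_of_set[of "f ` \<tau>"], of "i - 1" "j - 1"] assms len_xsl
    by simp
  then show ?thesis unfolding fitv_def by (simp add: of_rat_less)
qed

lemma fv_inj: assumes "i \<in> {1..k}" "j \<in> {1..k}" "fv i = fv j" shows "i = j"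
  using fv_mono[of i j] fv_mono[of j i] assms by (cases i j rule: linorder_cases) auto

lemma fv_ex: assumes "t \<in> \<tau>" shows "\<exists>i\<in>{1..k}. r t = fv i"
proof -
  have "f t \<in> set xsl" using assms fintau by simp
  then obtain j where j: "j < length xsl" "xsl ! j = f t" by (metis in_set_conv_nth)
  then show ?thesis using len_xsl unfolding fitv_def by (intro bexI[of _ "Suc j"]) auto
qed

lemma fv_cls: assumes "i \<in> {1..k}" shows "\<exists>t\<in>\<tau>. r t = fv i"
proof -
  have "xsl ! (i - 1) \<in> set xsl" using assms len_xsl by auto
  then have "xsl ! (i - 1) \<in> f ` \<tau>" using fintau by simp
  then show ?thesis unfolding fitv_def by auto
qed

definition lev :: "('v \<Rightarrow> 't) \<Rightarrow> nat set" where
  "lev S = {i\<in>{1..k}. \<exists>x\<in>V. r (S x) = fv i}"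
definition mS :: "('v \<Rightarrow> 't) \<Rightarrow> nat" where "mS S = Max (lev S)"
definition neutral :: "('v \<Rightarrow> 't) \<Rightarrow> bool" where "neutral S = (\<forall>x\<in>V. r (S x) = fv (mS S))"
definition T :: "nat \<Rightarrow> 't set" where "T i = {t. r t = fv i}"
definition C :: "nat \<Rightarrow> real" where "C i = fv i / (fv i - fv (i - 1)) * nn ^ 3"

lemma lev_ne: assumes "S \<in> II" shows "lev S \<noteq> {}" "finite (lev S)"
proof -
  obtain x where x: "x \<in> V" using cardV by fastforce
  then have "S x \<in> \<tau>" using assms unfolding II_def by auto
  then obtain i where "i \<in> {1..k}" "r (S x) = fv i" using fv_ex by blast
  then show "lev S \<noteq> {}" unfolding lev_def using x by blast
  show "finite (lev S)" unfolding lev_def by simp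
qed

lemma mS_in: assumes "S \<in> II" shows "mS S \<in> lev S" "1 \<le> mS S" "mS S \<le> k"
  using Max_in[OF lev_ne(2)[OF assms] lev_ne(1)[OF assms]] unfolding mS_def lev_def by auto

lemma le_mS: assumes "S \<in> II" "i \<in> lev S" shows "i \<le> mS S"
  unfolding mS_def using lev_ne(2)[OF assms(1)] assms(2) by simp

lemma top_le: assumes S: "S \<in> II" and x: "x \<in> V" shows "r (S x) \<le> fv (mS S)"
proof -
  have "S x \<in> \<tau>" using S x unfolding II_def by auto
  then obtain i where i: "i \<in> {1..k}" "r (S x) = fv i" using fv_ex by blast
  then have "i \<in> lev S" unfolding lev_def using x by blast
  then have "i \<le> mS S" using le_mS[OF S] by simp
  then show ?thesis using i fv_mono[of i "mS S"] mS_in[OF S] by (cases "i = mS S") auto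
qed

lemma sec_le: assumes S: "S \<in> II" and x: "x \<in> V" and ne: "r (S x) \<noteq> fv (mS S)"
  shows "r (S x) \<le> fv (mS S - 1)" "2 \<le> mS S"
proof -
  have "S x \<in> \<tau>" using S x unfolding II_def by auto
  then obtain i where i: "i \<in> {1..k}" "r (S x) = fv i" using fv_ex by blast
  then have "i \<in> lev S" unfolding lev_def using x by blast
  then have "i \<le> mS S" using le_mS[OF S] by simp
  then have il: "i < mS S" using ne i by (cases "i = mS S") auto
  then show "2 \<le> mS S" using i by auto
  have "i < mS S - 1 \<or> i = mS S - 1" using il by linarith
  then show "r (S x) \<le> fv (mS S - 1)"
  proof
    assume a: "i < mS S - 1"
    have "1 \<le> i" "mS S - 1 \<le> k" using i mS_in(3)[OF S] by auto
    then show ?thesis using fv_mono[of i "mS S - 1"] a i by simp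
  qed (use i in simp)
qed

lemma upd_II: "S \<in> II \<Longrightarrow> v \<in> V \<Longrightarrow> S(w := S v) \<in> II"
  unfolding II_def by auto

lemma lev_upd: assumes "v \<in> V" shows "lev (S(w := S v)) \<subseteq> lev S"
  unfolding lev_def using assms by auto

lemma mS_upd: assumes S: "S \<in> II" and v: "v \<in> V"
  shows "mS (S(w := S v)) \<le> mS S"
  using mS_in(1)[OF upd_II[OF S v, of w]] lev_upd[OF v, of S w] le_mS[OF S] by blast

lemma neutral_upd: assumes S: "S \<in> II" and v: "v \<in> V" and n: "neutral S"
  shows "neutral (S(w := S v))" "mS (S(w := S v)) = mS S"
proof -
  let ?S = "S(w := S v)"
  have S': "?S \<in> II" using upd_II[OF S v] .
  obtain x where x: "x \<in> V" using cardV by fastforce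
  have "r (?S x) = fv (mS S)" using n v x unfolding neutral_def by auto
  then have ex: "\<exists>y\<in>V. r (?S y) = fv (mS S)" using x by blast
  then have "mS S \<in> lev ?S" unfolding lev_def mem_Collect_eq atLeastAtMost_iff using mS_in(2,3)[OF S] by blast
  then show m: "mS ?S = mS S" using le_mS[OF S'] mS_upd[OF S v, of w] by fastforce
  show "neutral ?S" unfolding neutral_def m using n v unfolding neutral_def by auto
qed

lemma phi_drop: assumes S: "S \<in> II" and v: "v \<in> V" and lt: "mS (S(w := S v)) < mS S"
  shows "phi (T (mS S)) (S(w := S v)) = 0"
proof -
  let ?S = "S(w := S v)"
  have "\<forall>x\<in>V. ?S x \<notin> T (mS S)"
  proof
    fix x assume x: "x \<in> V"
    show "?S x \<notin> T (mS S)"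
    proof
      assume "?S x \<in> T (mS S)"
      then have ex: "\<exists>y\<in>V. r (?S y) = fv (mS S)" using x unfolding T_def by blast
      then have "mS S \<in> lev ?S" unfolding lev_def mem_Collect_eq atLeastAtMost_iff using mS_in(2,3)[OF S] by blast
      then show False using le_mS[OF upd_II[OF S v]] lt by fastforce
    qed
  qed
  then show ?thesis unfolding phi_def by simp
qed

lemma C_nonneg: assumes "2 \<le> i" "i \<le> k" shows "C i \<ge> 0"
proof -
  have "fv (i - 1) < fv i" using fv_mono[of "i - 1" i] assms by auto
  moreover have "fv (i - 1) \<ge> 1"
  proof -
    have "i - 1 \<in> {1..k}" using assms by auto
    then obtain t where "t \<in> \<tau>" "r t = fv (i - 1)" using fv_cls by blast
    moreover from this have "f t \<ge> 1" using fit by auto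
    ultimately show ?thesis by (metis of_rat_1 of_rat_less_eq)
  qed
  ultimately show ?thesis unfolding C_def by auto
qed

lemma C_drift: assumes "2 \<le> i" "i \<le> k"
  shows "C i * ((fv i - fv (i - 1)) / (fv i * nn ^ 3)) = 1"
proof -
  have "fv (i - 1) < fv i" using fv_mono[of "i - 1" i] assms by auto
  moreover have "fv (i - 1) \<ge> 1"
  proof -
    have "i - 1 \<in> {1..k}" using assms by auto
    then obtain t where "t \<in> \<tau>" "r t = fv (i - 1)" using fv_cls by blast
    moreover from this have "f t \<ge> 1" using fit by auto
    ultimately show ?thesis by (metis of_rat_1 of_rat_less_eq)
  qed
  moreover have "nn > 0" using cardV by simp
  ultimately show ?thesis unfolding C_def by (simp add: field_simps)
qed

end


context msetup begin

definition Phi :: "nat \<Rightarrow> nat \<Rightarrow> (('v \<Rightarrow> 't) \<Rightarrow> bool) \<Rightarrow> ('v \<Rightarrow> 't) \<Rightarrow> real" where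
  "Phi lo L P S = (if P S then 0 else if neutral S then NN S else
     C (mS S) * (phimax - phi (T (mS S)) S) + (\<Sum>i\<in>{lo..<mS S}. C i * phimax) + (real L - 1) * nn ^ 6)"

lemma phimax_nonneg: "phimax \<ge> 0" using phi_nonneg phi_le by (meson order_trans)

lemma generic:
  assumes lo: "2 \<le> lo" and L: "1 \<le> L" and M0: "M0 \<in> II"
    and H1: "\<And>S. S \<in> II \<Longrightarrow> \<not> P S \<Longrightarrow> \<not> neutral S \<Longrightarrow> lo \<le> mS S"
    and H2: "\<And>S. S \<in> II \<Longrightarrow> \<not> P S \<Longrightarrow> neutral S \<Longrightarrow> 2 \<le> L"
    and H3: "\<And>S. S \<in> II \<Longrightarrow> \<not> P S \<Longrightarrow> \<exists>v\<in>V. \<exists>w\<in>V. S v \<noteq> S w"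
  shows "moran_exp_hit V E f M0 P \<le> ennreal ((\<Sum>i\<in>{lo..k}. C i * nn) + (real L - 1) * nn ^ 6)"
proof -
  let ?P = "Phi lo L P"
  let ?B = "(\<Sum>i\<in>{lo..k}. C i * nn) + (real L - 1) * nn ^ 6"
  have Lr: "real L - 1 \<ge> 0" using L by simp
  have n6: "nn ^ 6 \<ge> 0" by simp
  have Csum_nonneg: "(\<Sum>i\<in>{lo..<m}. C i * phimax) \<ge> 0" if "m \<le> k" for m
    using lo that C_nonneg phimax_nonneg by (intro sum_nonneg mult_nonneg_nonneg) auto
  have NNL: "NN S \<le> (real L - 1) * nn ^ 6" if "S \<in> II" "\<not> P S" "neutral S" for S
  proof -
    have "2 \<le> L" using H2 that by blast
    then have "nn ^ 6 \<le> (real L - 1) * nn ^ 6" by (simp add: mult_le_cancel_right1)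
    then show ?thesis using NN_bounds(2)[OF that(1)] by linarith
  qed
  have nonneg: "?P S \<ge> 0" if S: "S \<in> II" for S
  proof -
    have "mS S \<le> k" using mS_in[OF S] by simp
    show ?thesis
    proof (cases "P S \<or> neutral S")
      case True then show ?thesis unfolding Phi_def using NN_bounds(1)[OF S] by auto
    next
      case False
      then have m2: "2 \<le> mS S" using sec_le[OF S] unfolding neutral_def by blast
      have "C (mS S) * (phimax - phi (T (mS S)) S) \<ge> 0"
        using C_nonneg[OF m2 mS_in(3)[OF S]] phi_le by simp
      then show ?thesis unfolding Phi_def using False Csum_nonneg[OF mS_in(3)[OF S]] Lr by simp
    qed
  qed
  have bound: "?P S \<le> ?B" if S: "S \<in> II" for S
  proof -
    have B0: "(\<Sum>i\<in>{lo..k}. C i * nn) \<ge> 0" using lo C_nonneg by (intro sum_nonneg) auto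
    show ?thesis
    proof (cases "P S")
      case True then show ?thesis unfolding Phi_def using B0 Lr by simp
    next
      case nP: False
      show ?thesis
      proof (cases "neutral S")
        case True then show ?thesis unfolding Phi_def using nP NNL[OF S nP True] B0 by simp
      next
        case False
        let ?m = "mS S"
        have m: "lo \<le> ?m" "?m \<le> k" using H1[OF S nP False] mS_in[OF S] by auto
        have "C ?m * (phimax - phi (T ?m) S) + (\<Sum>i\<in>{lo..<?m}. C i * phimax)
            \<le> C ?m * phimax + (\<Sum>i\<in>{lo..<?m}. C i * phimax)"
          using C_nonneg[of ?m] m lo phi_nonneg[of "T ?m" S] by (simp add: mult_left_mono)
        also have "\<dots> = (\<Sum>i\<in>{lo..?m}. C i * phimax)"
          using m by (simp add: atLeastLessThanSuc_atLeastAtMost[symmetric])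
        also have "\<dots> \<le> (\<Sum>i\<in>{lo..k}. C i * phimax)"
          using m lo C_nonneg phimax_nonneg by (intro sum_mono2) auto
        also have "\<dots> \<le> (\<Sum>i\<in>{lo..k}. C i * nn)"
          using lo C_nonneg phimax_le by (intro sum_mono mult_left_mono) auto
        finally show ?thesis unfolding Phi_def using nP False by simp
      qed
    qed
  qed
  have drift_cond: "measure_pmf.expectation (moran_step V E f S) ?P \<le> ?P S - 1"
    if S: "S \<in> II" and nP: "\<not> P S" for S
  proof -
    have ex: "measure_pmf.expectation (moran_step V E f S) ?P = Ex2 S (\<lambda>v w. ?P (S(w := S v)))"
      using step_exp[OF S] Ex_Ex2 by simp
    obtain v1 w1 where vw: "v1 \<in> V" "w1 \<in> V" "S v1 \<noteq> S w1" using H3[OF S nP] by blast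
    show ?thesis
    proof (cases "neutral S")
      case True
      have "Ex2 S (\<lambda>v w. ?P (S(w := S v))) \<le> Ex2 S (\<lambda>v w. NN (S(w := S v)))"
      proof (rule Ex2_mono[OF S])
        fix v w assume v: "v \<in> V" "w \<in> V" "E v w"
        show "?P (S(w := S v)) \<le> NN (S(w := S v))"
          unfolding Phi_def using neutral_upd(1)[OF S v(1) True] NN_bounds(1)[OF upd_II[OF S v(1)]] by simp
      qed
      also have "\<dots> = Ex S NN" unfolding Ex_Ex2 ..
      also have "\<dots> \<le> NN S - 1"
        using NN_drift[OF S _ vw, of "fv (mS S)"] True unfolding neutral_def by blast
      finally show ?thesis unfolding ex Phi_def using nP True by simp
    next
      case False
      let ?m = "mS S"
      let ?K = "(\<Sum>i\<in>{lo..<?m}. C i * phimax) + (real L - 1) * nn ^ 6"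
      let ?A = "T ?m"
      have m: "lo \<le> ?m" "?m \<le> k" "2 \<le> ?m" using H1[OF S nP False] mS_in[OF S] lo by auto
      have Cm: "C ?m \<ge> 0" using C_nonneg m by simp
      have K0: "?K \<ge> 0" using Csum_nonneg[OF m(2)] Lr by simp
      have pw: "?P (S(w := S v)) \<le> C ?m * (phimax - phi ?A (S(w := S v))) + ?K"
        if v: "v \<in> V" "w \<in> V" "E v w" for v w
      proof -
        let ?S = "S(w := S v)"
        have S': "?S \<in> II" using upd_II[OF S v(1)] .
        have psi0: "C ?m * (phimax - phi ?A ?S) \<ge> 0" using Cm phi_le by simp
        show ?thesis
        proof (cases "P ?S")
          case True then show ?thesis unfolding Phi_def using psi0 K0 by simp
        next
          case nP': False
          show ?thesis
          proof (cases "neutral ?S")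
            case True
            have "NN ?S \<le> ?K" using NNL[OF S' nP' True] Csum_nonneg[OF m(2)] by linarith
            then show ?thesis unfolding Phi_def using nP' True psi0 by simp
          next
            case nN': False
            have m'le: "mS ?S \<le> ?m" using mS_upd[OF S v(1)] .
            show ?thesis
            proof (cases "mS ?S = ?m")
              case True then show ?thesis unfolding Phi_def using nP' nN' by simp
            next
              case False
              then have lt: "mS ?S < ?m" using m'le by simp
              have m': "lo \<le> mS ?S" using H1[OF S' nP' nN'] .
              have "C (mS ?S) * (phimax - phi (T (mS ?S)) ?S) + (\<Sum>i\<in>{lo..<mS ?S}. C i * phimax)
                  \<le> C (mS ?S) * phimax + (\<Sum>i\<in>{lo..<mS ?S}. C i * phimax)"
                using C_nonneg[of "mS ?S"] m' lo lt m phi_nonneg[of _ ?S] by (simp add: mult_left_mono)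
              also have "\<dots> = (\<Sum>i\<in>{lo..<Suc (mS ?S)}. C i * phimax)"
                using m' by simp
              also have "\<dots> \<le> (\<Sum>i\<in>{lo..<?m}. C i * phimax)"
                using lt lo m C_nonneg phimax_nonneg by (intro sum_mono2) auto
              finally have "?P ?S \<le> ?K" unfolding Phi_def using nP' nN' by simp
              moreover have "phi ?A ?S = 0" using phi_drop[OF S v(1) lt] .
              moreover have "C ?m * phimax \<ge> 0" using Cm phimax_nonneg by simp
              ultimately show ?thesis by simp
            qed
          qed
        qed
      qed
      have Cge: "C ?m * Ex2 S (\<lambda>v w. D ?A S v w / deg w) \<ge> 1"
      proof -
        obtain x0 where x0: "x0 \<in> V" "r (S x0) = fv ?m"
          using mS_in(1)[OF S] unfolding lev_def by blast
        obtain y0 where y0: "y0 \<in> V" "r (S y0) \<noteq> fv ?m" using False unfolding neutral_def by blast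
        obtain v0 w0 where e: "v0 \<in> V" "w0 \<in> V" "E v0 w0" "r (S v0) = fv ?m" "r (S w0) \<noteq> fv ?m"
          using edge_cross[of x0 y0 "\<lambda>x. r (S x) = fv ?m"] x0 y0 by blast
        have d: "Ex2 S (\<lambda>v w. D ?A S v w / deg w) \<ge> (fv ?m - fv (?m - 1)) / (fv ?m * nn ^ 3)"
        proof (rule drift_top[OF S])
          show "\<forall>x\<in>V. r (S x) \<le> fv ?m" using top_le[OF S] by blast
          show "\<forall>x\<in>V. (S x \<in> ?A) = (r (S x) = fv ?m)" unfolding T_def by simp
          show "S v0 \<in> ?A" "S w0 \<notin> ?A" using e unfolding T_def by auto
          show "r (S w0) \<le> fv (?m - 1)" using sec_le(1)[OF S e(2) e(5)] .
          have "1 \<le> ?m - 1" using m by linarith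
          then show "fv (?m - 1) \<le> fv ?m" using fv_mono[of "?m - 1" ?m] m by simp
        qed (use e in auto)
        have "C ?m * ((fv ?m - fv (?m - 1)) / (fv ?m * nn ^ 3)) \<le> C ?m * Ex2 S (\<lambda>v w. D ?A S v w / deg w)"
          using d Cm by (rule mult_left_mono)
        then show ?thesis using C_drift[OF m(3) m(2)] by linarith
      qed
      have "Ex2 S (\<lambda>v w. ?P (S(w := S v))) \<le> Ex2 S (\<lambda>v w. C ?m * (phimax - phi ?A (S(w := S v))) + ?K)"
        by (rule Ex2_mono[OF S]) (rule pw)
      also have "\<dots> = C ?m * (phimax - Ex S (phi ?A)) + ?K"
        unfolding Ex_Ex2 Ex2_add Ex2_cmult Ex2_diff Ex2_const[OF S] ..
      also have "\<dots> = C ?m * (phimax - phi ?A S) + ?K - C ?m * Ex2 S (\<lambda>v w. D ?A S v w / deg w)"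
        unfolding Ex_phi[OF S] by (simp add: algebra_simps)
      finally have "Ex2 S (\<lambda>v w. ?P (S(w := S v))) \<le> C ?m * (phimax - phi ?A S) + ?K - C ?m * Ex2 S (\<lambda>v w. D ?A S v w / deg w)" .
      then show ?thesis unfolding ex using nP False Cge by (simp add: Phi_def)
    qed
  qed
  have "moran_exp_hit V E f M0 P \<le> ennreal (?P M0)"
    unfolding moran_exp_hit_def moran_traj_gtraj
    by (rule drift[OF M0]) (auto simp: step_fin step_II nonneg drift_cond)
  also have "\<dots> \<le> ennreal ?B" using bound[OF M0] by (rule ennreal_leI)
  finally show ?thesis .
qed

end


context msetup begin

lemma bound_conv: assumes "2 \<le> lo"
  shows "(\<Sum>i\<in>{lo..k}. C i * nn) + (real L - 1) * nn ^ 6 \<le> (real L - 1) * nn ^ 6 + fit_sum f \<tau> (card V) lo"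
proof -
  have "(\<Sum>i\<in>{lo..k}. C i * nn) \<le> fit_sum f \<tau> (card V) lo"
    unfolding fit_sum_def
  proof (rule sum_mono)
    fix i assume i: "i \<in> {lo..k}"
    let ?q = "fv i / (fv i - fv (i - 1))"
    have n0: "nn > 0" using cardV by simp
    have "C i \<ge> 0" using C_nonneg[of i] i assms by auto
    moreover have "?q = C i / nn ^ 3" unfolding C_def using n0 by simp
    ultimately have q: "?q \<ge> 0" using n0 by simp
    have "C i * nn = ?q * (nn * nn ^ 3)" unfolding C_def by (simp add: ac_simps)
    also have "\<dots> \<le> ?q * ((nn + 1) * nn ^ 3)" using q n0 by (intro mult_left_mono) auto
    finally show "C i * nn \<le> ?q * (nn + 1) * nn ^ 3" by (simp add: ac_simps)
  qed
  then show ?thesis by simp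
qed

lemma fit_mult_ge1: assumes "t \<in> \<tau>" "r t = fv i" shows "1 \<le> fit_mult f \<tau> i"
proof -
  have "t \<in> {x \<in> \<tau>. r x = fv i}" using assms by simp
  then have "{x \<in> \<tau>. r x = fv i} \<noteq> {}" by blast
  then show ?thesis unfolding fit_mult_def using fintau by (simp add: Suc_le_eq card_gt_0_iff)
qed

lemma fit_mult_ge2: assumes "t1 \<in> \<tau>" "t2 \<in> \<tau>" "t1 \<noteq> t2" "r t1 = fv i" "r t2 = fv i"
  shows "2 \<le> fit_mult f \<tau> i"
proof -
  have "{t1, t2} \<subseteq> {x \<in> \<tau>. r x = fv i}" using assms by auto
  then have "card {t1, t2} \<le> card {x \<in> \<tau>. r x = fv i}" using fintau by (intro card_mono) auto
  then show ?thesis unfolding fit_mult_def using assms(3) by simp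
qed

lemma nonneutral_m2: assumes "S \<in> II" "\<not> neutral S" shows "2 \<le> mS S"
  using assms sec_le(2) unfolding neutral_def by blast

lemma absorbed_type_H3: assumes "\<not> absorbed_type V b S" shows "\<exists>v\<in>V. \<exists>w\<in>V. S v \<noteq> S w"
  using assms unfolding absorbed_type_def by metis

lemma neutral_type: assumes S: "S \<in> II" "neutral S" and b: "b \<in> \<tau>" "r b = fv j" "j \<in> {1..k}"
  and na: "\<not> absorbed_type V b S"
  shows "2 \<le> fit_mult f \<tau> j"
proof -
  obtain v w where vw: "v \<in> V" "w \<in> V" "S v = b" "S w \<noteq> b" using na unfolding absorbed_type_def by blast
  have "fv j = fv (mS S)" using S(2) vw b unfolding neutral_def by auto
  then have "r (S w) = fv j" using S(2) vw unfolding neutral_def by auto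
  moreover have "S w \<in> \<tau>" using S(1) vw unfolding II_def by auto
  ultimately show ?thesis using fit_mult_ge2[of b "S w" j] b vw by auto
qed

end


theorem theorem18:
  fixes V :: "'v set" and E :: "'v \<Rightarrow> 'v \<Rightarrow> bool" and \<tau> :: "'t set"
    and f :: "'t \<Rightarrow> rat" and M0 :: "'v \<Rightarrow> 't" and n :: nat
  assumes "connected_graph V E"
    and "n = card V"
    and "card \<tau> > 1"
    and "\<forall>x\<in>\<tau>. f x \<ge> 1"
    and "M0 \<in> Omega0 V \<tau>"
  shows "A_exp V E \<tau> f M0 \<le> ennreal ((real (maxmult f \<tau>) - 1) * real n ^ 6 + fit_sum f \<tau> n 2)
    \<and> (\<forall>j\<in>{2..nfit f \<tau>}. \<forall>\<beta>\<in>\<tau>. real_of_rat (f \<beta>) = fitv f \<tau> j \<longrightarrow>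
           A_type_exp V E f M0 \<beta> \<le> ennreal ((real (fit_mult f \<tau> j) - 1) * real n ^ 6 + fit_sum f \<tau> n j))
    \<and> (\<forall>\<beta>\<in>\<tau>. real_of_rat (f \<beta>) = fitv f \<tau> 1 \<longrightarrow>
           A_type_exp V E f M0 \<beta> \<le> ennreal ((real (fit_mult f \<tau> 1) - 1) * real n ^ 6 + fit_sum f \<tau> n 2))"
proof -
  have fV: "finite V" using assms(1) by (simp add: connected_graph_def simple_graph_def)
  have M0t: "M0 ` V = \<tau>" using assms(5) by (simp add: Omega0_def)
  have ft: "finite \<tau>" using assms(3) by (metis card.infinite not_less_zero)
  have "card \<tau> \<le> card V" using M0t fV card_image_le by blast
  then have cV: "card V \<ge> 2" using assms(3) by simp
  interpret msetup V E \<tau> f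
    by unfold_locales (use assms(1,4) cV ft in auto)
  have M0: "M0 \<in> II" unfolding II_def using M0t by auto
  have nn: "real n = nn" using assms(2) by simp
  have ex_other: "\<exists>w\<in>V. S w \<noteq> S v0" if "S \<in> II" "\<not> absorbed_total V \<tau> S" "v0 \<in> V" for S v0
  proof -
    have "S v0 \<in> \<tau>" using that unfolding II_def by auto
    then show ?thesis using that(2) unfolding absorbed_total_def by metis
  qed
  obtain v00 where v00: "v00 \<in> V" using cV by fastforce
  have P1: "A_exp V E \<tau> f M0 \<le> ennreal ((real (maxmult f \<tau>) - 1) * real n ^ 6 + fit_sum f \<tau> n 2)"
  proof -
    have finM: "finite (fit_mult f \<tau> ` {1..k})" by simp
    have maxge: "fit_mult f \<tau> i \<le> maxmult f \<tau>" if "i \<in> {1..k}" for i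
      unfolding maxmult_def using that finM by (intro Max_ge) auto
    have L1: "1 \<le> maxmult f \<tau>"
    proof -
      have "M0 v00 \<in> \<tau>" using M0t v00 by auto
      then obtain i where "i \<in> {1..k}" "r (M0 v00) = fv i" using fv_ex by blast
      then show ?thesis using fit_mult_ge1[OF \<open>M0 v00 \<in> \<tau>\<close>] maxge by (meson order_trans)
    qed
    have "A_exp V E \<tau> f M0 \<le> ennreal ((\<Sum>i\<in>{2..k}. C i * nn) + (real (maxmult f \<tau>) - 1) * nn ^ 6)"
      unfolding A_exp_def
    proof (rule generic[OF _ L1 M0])
      fix S assume S: "S \<in> II" "\<not> absorbed_total V \<tau> S"
      show "\<exists>v\<in>V. \<exists>w\<in>V. S v \<noteq> S w" using ex_other[OF S v00] v00 by metis
      show "\<not> neutral S \<Longrightarrow> 2 \<le> mS S" using nonneutral_m2 S by blast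
      assume N: "neutral S"
      obtain w where w: "w \<in> V" "S w \<noteq> S v00" using ex_other[OF S v00] by blast
      have "r (S w) = fv (mS S)" "r (S v00) = fv (mS S)" using N w v00 unfolding neutral_def by auto
      moreover have "S w \<in> \<tau>" "S v00 \<in> \<tau>" using S(1) w v00 unfolding II_def by auto
      ultimately have "2 \<le> fit_mult f \<tau> (mS S)" using fit_mult_ge2 w(2) by blast
      then show "2 \<le> maxmult f \<tau>" using maxge[of "mS S"] mS_in[OF S(1)] by simp
    qed simp
    also have "\<dots> \<le> ennreal ((real (maxmult f \<tau>) - 1) * real n ^ 6 + fit_sum f \<tau> n 2)"
      unfolding nn assms(2) by (rule ennreal_leI, rule bound_conv) simp
    finally show ?thesis .
  qed
  have P2: "A_type_exp V E f M0 b \<le> ennreal ((real (fit_mult f \<tau> j) - 1) * real n ^ 6 + fit_sum f \<tau> n lo)"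
    if b: "b \<in> \<tau>" "r b = fv j" "j \<in> {1..k}" and lo: "2 \<le> lo"
      and H1: "\<And>S. S \<in> II \<Longrightarrow> \<not> absorbed_type V b S \<Longrightarrow> \<not> neutral S \<Longrightarrow> lo \<le> mS S" for b j lo
  proof -
    have "A_type_exp V E f M0 b \<le> ennreal ((\<Sum>i\<in>{lo..k}. C i * nn) + (real (fit_mult f \<tau> j) - 1) * nn ^ 6)"
      unfolding A_type_exp_def
    proof (rule generic[OF lo fit_mult_ge1[OF b(1,2)] M0])
      fix S assume S: "S \<in> II" "\<not> absorbed_type V b S"
      show "\<exists>v\<in>V. \<exists>w\<in>V. S v \<noteq> S w" using absorbed_type_H3[OF S(2)] .
      show "\<not> neutral S \<Longrightarrow> lo \<le> mS S" using H1 S by blast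
      show "neutral S \<Longrightarrow> 2 \<le> fit_mult f \<tau> j" using neutral_type[OF S(1) _ b S(2)] by blast
    qed
    also have "\<dots> \<le> ennreal ((real (fit_mult f \<tau> j) - 1) * real n ^ 6 + fit_sum f \<tau> n lo)"
      unfolding nn assms(2) by (rule ennreal_leI, rule bound_conv[OF lo])
    finally show ?thesis .
  qed
  have P2': "A_type_exp V E f M0 b \<le> ennreal ((real (fit_mult f \<tau> j) - 1) * real n ^ 6 + fit_sum f \<tau> n j)"
    if "j \<in> {2..k}" "b \<in> \<tau>" "r b = fv j" for j b
  proof (rule P2)
    show "j \<in> {1..k}" "2 \<le> j" using that by auto
    fix S assume S: "S \<in> II" "\<not> absorbed_type V b S"
    then obtain v where v: "v \<in> V" "S v = b" unfolding absorbed_type_def by blast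
    then have "j \<in> lev S" unfolding lev_def using that by auto
    then show "j \<le> mS S" using le_mS[OF S(1)] by simp
  qed (use that in auto)
  have P3: "A_type_exp V E f M0 b \<le> ennreal ((real (fit_mult f \<tau> 1) - 1) * real n ^ 6 + fit_sum f \<tau> n 2)"
    if "b \<in> \<tau>" "r b = fv 1" for b
  proof (rule P2)
    have "M0 v00 \<in> \<tau>" using M0t v00 by auto
    then obtain i where "i \<in> {1..k}" using fv_ex by blast
    then show "1 \<in> {1..k}" by auto
    fix S assume S: "S \<in> II" "\<not> absorbed_type V b S" "\<not> neutral S"
    then show "2 \<le> mS S" using nonneutral_m2 by blast
  qed (use that in auto)
  show ?thesis using P1 P2' P3 by blast
qed


end
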